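(* Let $G$ be a graph. (i) Every self-locating-dominating code in $G$ is a $2$-dominating set of $G$. (ii) If the girth of $G$ is at least $5$, then every $2$-dominating set of $G$ is a self-locating-dominating code of $G$.
   Context: All graphs are finite, simple and undirected (not necessarily connected). For $u\in V$, $N(u)$ is the set of neighbours of $u$ and $N[u]=N(u)\cup\{u\}$. A code is a non-empty subset $C\subseteq V$; $I(C;u)=N[u]\cap C$. A code $C$ is self-locating-dominating if for every $u\in V\setminus C$ we have $I(C;u)\neq\emptyset$ and $\bigcap_{c\in I(C;u)}N[c]=\{u\}$. A set $S\subseteq V$ is $2$-dominating if $|N[u]\cap S|\ge 2$ for every $u\in V\setminus S$. The girth is the length of a shortest cycle; acyclic graphs have infinite girth. *)

theory Defs
  imports Main "HOL-Library.Extended_Nat"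
begin

definition graph :: "'a set \<Rightarrow> ('a \<Rightarrow> 'a \<Rightarrow> bool) \<Rightarrow> bool" where
  "graph V E \<longleftrightarrow> finite V \<and> V \<noteq> {} \<and> (\<forall>u v. E u v \<longrightarrow> u \<in> V \<and> v \<in> V)
     \<and> (\<forall>u v. E u v \<longrightarrow> E v u) \<and> (\<forall>u. \<not> E u u)"

definition nbhd :: "'a set \<Rightarrow> ('a \<Rightarrow> 'a \<Rightarrow> bool) \<Rightarrow> 'a \<Rightarrow> 'a set" where
  "nbhd V E u = {v \<in> V. E u v}"

definition cnbhd :: "'a set \<Rightarrow> ('a \<Rightarrow> 'a \<Rightarrow> bool) \<Rightarrow> 'a \<Rightarrow> 'a set" where
  "cnbhd V E u = insert u (nbhd V E u)"

definition Iset :: "'a set \<Rightarrow> ('a \<Rightarrow> 'a \<Rightarrow> bool) \<Rightarrow> 'a set \<Rightarrow> 'a \<Rightarrow> 'a set" where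
  "Iset V E C u = cnbhd V E u \<inter> C"

definition self_locating_dominating :: "'a set \<Rightarrow> ('a \<Rightarrow> 'a \<Rightarrow> bool) \<Rightarrow> 'a set \<Rightarrow> bool" where
  "self_locating_dominating V E C \<longleftrightarrow> C \<subseteq> V \<and> C \<noteq> {} \<and>
     (\<forall>u \<in> V - C. Iset V E C u \<noteq> {} \<and>
        (\<Inter>c \<in> Iset V E C u. cnbhd V E c) = {u})"

definition two_dominating :: "'a set \<Rightarrow> ('a \<Rightarrow> 'a \<Rightarrow> bool) \<Rightarrow> 'a set \<Rightarrow> bool" where
  "two_dominating V E S \<longleftrightarrow> S \<subseteq> V \<and> (\<forall>u \<in> V - S. card (cnbhd V E u \<inter> S) \<ge> 2)"

definition is_cycle :: "'a set \<Rightarrow> ('a \<Rightarrow> 'a \<Rightarrow> bool) \<Rightarrow> 'a list \<Rightarrow> bool" where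
  "is_cycle V E xs \<longleftrightarrow> length xs \<ge> 3 \<and> distinct xs \<and> set xs \<subseteq> V \<and>
     (\<forall>i < length xs - 1. E (xs ! i) (xs ! Suc i)) \<and> E (last xs) (hd xs)"

text \<open>Girth: length of a shortest cycle; \<infinity> for acyclic graphs.\<close>
definition girth :: "'a set \<Rightarrow> ('a \<Rightarrow> 'a \<Rightarrow> bool) \<Rightarrow> enat" where
  "girth V E = (INF xs \<in> {xs. is_cycle V E xs}. enat (length xs))"

end

theory Submission
  imports Defs
begin

lemma girth_le: "is_cycle V E xs \<Longrightarrow> girth V E \<le> enat (length xs)"
  unfolding girth_def by (rule INF_lower) simp

lemma cyc3: "u \<in> V \<Longrightarrow> a \<in> V \<Longrightarrow> b \<in> V \<Longrightarrow> distinct [u,a,b] \<Longrightarrow> E u a \<Longrightarrow> E a b \<Longrightarrow> E b u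
  \<Longrightarrow> is_cycle V E [u,a,b]"
  unfolding is_cycle_def by (auto simp: less_Suc_eq nth_Cons split: nat.splits)

lemma cyc4: "u \<in> V \<Longrightarrow> a \<in> V \<Longrightarrow> b \<in> V \<Longrightarrow> w \<in> V \<Longrightarrow> distinct [u,a,w,b] \<Longrightarrow> E u a \<Longrightarrow> E a w \<Longrightarrow> E w b \<Longrightarrow> E b u
  \<Longrightarrow> is_cycle V E [u,a,w,b]"
  unfolding is_cycle_def by (auto simp: less_Suc_eq nth_Cons split: nat.splits)

theorem mainTheorem10:
  fixes V :: "'a set" and E :: "'a \<Rightarrow> 'a \<Rightarrow> bool"
  assumes "graph V E"
  shows "(\<forall>C. self_locating_dominating V E C \<longrightarrow> two_dominating V E C)
    \<and> (girth V E \<ge> 5 \<longrightarrow> (\<forall>S. two_dominating V E S \<longrightarrow> self_locating_dominating V E S))"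
proof (intro conjI allI impI)
  have G: "finite V" "V \<noteq> {}" "\<And>u v. E u v \<Longrightarrow> u \<in> V \<and> v \<in> V" "\<And>u v. E u v \<Longrightarrow> E v u" "\<And>u. \<not> E u u"
    using assms unfolding graph_def by auto
  have fin: "\<And>u. finite (cnbhd V E u)" using G(1) unfolding cnbhd_def nbhd_def by auto
  fix C assume C: "self_locating_dominating V E C"
  show "two_dominating V E C" unfolding two_dominating_def
  proof (intro conjI ballI)
    show "C \<subseteq> V" using C unfolding self_locating_dominating_def by auto
    fix u assume u: "u \<in> V - C"
    have ne: "Iset V E C u \<noteq> {}" and int: "(\<Inter>c \<in> Iset V E C u. cnbhd V E c) = {u}"
      using C u unfolding self_locating_dominating_def by auto
    have f: "finite (cnbhd V E u \<inter> C)" using fin by auto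
    show "2 \<le> card (cnbhd V E u \<inter> C)"
    proof (rule ccontr)
      assume "\<not> ?thesis"
      then have "card (cnbhd V E u \<inter> C) = 1" using ne f unfolding Iset_def
        by (metis One_nat_def card_0_eq le_SucE less_2_cases linorder_not_le numeral_2_eq_2 numeral_One)
      then obtain c where c: "cnbhd V E u \<inter> C = {c}" by (auto simp: card_Suc_eq)
      then have "cnbhd V E c = {u}" using int unfolding Iset_def by simp
      moreover have "c \<in> cnbhd V E c" unfolding cnbhd_def by simp
      moreover have "c \<in> C" using c by auto
      ultimately show False using u by auto
    qed
  qed
next
  have G: "finite V" "V \<noteq> {}" "\<And>u v. E u v \<Longrightarrow> u \<in> V \<and> v \<in> V" "\<And>u v. E u v \<Longrightarrow> E v u" "\<And>u. \<not> E u u"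
    using assms unfolding graph_def by auto
  have fin: "\<And>u. finite (cnbhd V E u)" using G(1) unfolding cnbhd_def nbhd_def by auto
  assume g: "5 \<le> girth V E"
  fix S assume S: "two_dominating V E S"
  have SV: "S \<subseteq> V" and two: "\<And>u. u \<in> V - S \<Longrightarrow> 2 \<le> card (cnbhd V E u \<inter> S)"
    using S unfolding two_dominating_def by auto
  have no3: False if "is_cycle V E xs" "length xs < 5" for xs
  proof -
    have "girth V E \<le> enat (length xs)" using girth_le[OF that(1)] .
    with g that(2) show False by (metis enat_ord_simps(2) numeral_eq_enat order_trans linorder_not_le)
  qed
  show "self_locating_dominating V E S" unfolding self_locating_dominating_def
  proof (intro conjI ballI)
    show "S \<subseteq> V" by fact
    show "S \<noteq> {}"
    proof
      assume "S = {}"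
      with G(2) obtain u where "u \<in> V - S" by auto
      from two[OF this] \<open>S = {}\<close> show False by simp
    qed
    fix u assume u: "u \<in> V - S"
    have c2: "2 \<le> card (cnbhd V E u \<inter> S)" using two u by blast
    then obtain c1 c2 where cc: "c1 \<in> cnbhd V E u \<inter> S" "c2 \<in> cnbhd V E u \<inter> S" "c1 \<noteq> c2"
    proof -
      have "\<not> card (cnbhd V E u \<inter> S) \<le> Suc 0" using c2 by simp
      then show ?thesis using that card_le_Suc0_iff_eq[of "cnbhd V E u \<inter> S"] fin by blast
    qed
    have adj: "E u c" if "c \<in> cnbhd V E u \<inter> S" for c
      using that u unfolding cnbhd_def nbhd_def by auto
    show "Iset V E S u \<noteq> {}" using cc unfolding Iset_def by auto
    show "(\<Inter>c \<in> Iset V E S u. cnbhd V E c) = {u}"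
    proof
      show "{u} \<subseteq> (\<Inter>c \<in> Iset V E S u. cnbhd V E c)"
        using adj G(4) u unfolding Iset_def cnbhd_def nbhd_def by auto
      show "(\<Inter>c \<in> Iset V E S u. cnbhd V E c) \<subseteq> {u}"
      proof
        fix w assume w: "w \<in> (\<Inter>c \<in> Iset V E S u. cnbhd V E c)"
        have w1: "w \<in> cnbhd V E c1" and w2: "w \<in> cnbhd V E c2" using w cc unfolding Iset_def by auto
        have e1: "E u c1" and e2: "E u c2" using adj cc by auto
        have V: "u \<in> V" "c1 \<in> V" "c2 \<in> V" using e1 e2 G(3) by auto
        show "w \<in> {u}"
        proof (rule ccontr)
          assume wu: "w \<notin> {u}"
          show False
          proof (cases "w = c1 \<or> w = c2")
            case True
            then have "E c1 c2" using w1 w2 cc(3) G(4) unfolding cnbhd_def nbhd_def by auto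
            then have "is_cycle V E [u,c1,c2]"
              using cyc3[OF V] e1 e2 G(4,5) cc(3) by (metis distinct_length_2_or_more distinct_singleton list.set_intros(1) set_ConsD)
            then show False using no3 by fastforce
          next
            case False
            then have "E c1 w" "E w c2" "w \<in> V" using w1 w2 G(4) unfolding cnbhd_def nbhd_def by auto
            then have "is_cycle V E [u,c1,w,c2]"
              using cyc4[OF V(1,2,3), of w E] e1 e2 G(4,5) cc(3) False wu
              by (metis singletonI distinct.simps list.set_intros set_ConsD empty_iff list.set(1))
            then show False using no3 by fastforce
          qed
        qed
      qed
    qed
  qed
qed

end
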